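(* Let $n = 2k+1 > 3$ be an odd integer and $m = 3n-6 = 6k-3$. If an edge-coloring of a complete graph contains no rainbow $n$-cycle, then it contains no rainbow $m$-cycle.
   Context: A coloring is an arbitrary (not necessarily proper) assignment of colors, from an arbitrary set, to the edges of an undirected complete graph; the graph may be finite or infinite. A rainbow $n$-cycle is a cycle through $n$ distinct vertices whose $n$ edges all receive pairwise distinct colors. *)

theory Defs
  imports Main
begin

text \<open>A coloring of the complete graph on the vertex type 'v assigns a color to every
  edge, an edge being a two-element set of vertices. Only values on 2-sets matter.\<close>

definition rainbow_cycle :: "('v set \<Rightarrow> 'c) \<Rightarrow> nat \<Rightarrow> 'v list \<Rightarrow> bool" where
  "rainbow_cycle c n vs \<longleftrightarrow> 3 \<le> n \<and> length vs = n \<and> distinct vs \<and>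
     inj_on (\<lambda>i. c {vs ! i, vs ! ((i + 1) mod n)}) {..<n}"

definition has_rainbow_cycle :: "('v set \<Rightarrow> 'c) \<Rightarrow> nat \<Rightarrow> bool" where
  "has_rainbow_cycle c n \<longleftrightarrow> (\<exists>vs. rainbow_cycle c n vs)"

end

theory Submission
  imports Defs
begin
lemma modeq2:
  fixes a b m :: nat
  assumes "a < 2*m" "b < 2*m" "a mod m = b mod m" "m > 0"
  shows "a = b \<or> a = b + m \<or> b = a + m"
proof -
  consider "a < m" "b < m" | "a < m" "b \<ge> m" | "a \<ge> m" "b < m" | "a \<ge> m" "b \<ge> m" by linarith
  then show ?thesis
  proof cases
    case 1 then show ?thesis using assms by simp
  next
    case 2
    then have "b mod m = b - m" using assms by (simp add: le_mod_geq)
    then show ?thesis using 2 assms by simp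
  next
    case 3
    then have "a mod m = a - m" using assms by (simp add: le_mod_geq)
    then show ?thesis using 3 assms by simp
  next
    case 4
    then have "a mod m = a - m" "b mod m = b - m" using assms by (simp_all add: le_mod_geq)
    then show ?thesis using 4 assms by simp
  qed
qed

locale rc =
  fixes c :: "'v set \<Rightarrow> 'c" and q :: nat
  assumes q1: "1 \<le> q" and NR: "\<not> has_rainbow_cycle c (2*q+3)"
begin

definition V :: "'v list \<Rightarrow> nat \<Rightarrow> 'v" where
  "V W p = W ! (p mod (6*q+3))"

definition col :: "'v list \<Rightarrow> nat \<Rightarrow> 'c" where
  "col W p = c {V W p, V W (Suc p)}"

abbreviation RC :: "'v list \<Rightarrow> bool" where
  "RC W \<equiv> rainbow_cycle c (6*q+3) W"

lemma V_mod: "V W (p mod (6*q+3)) = V W p"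
  by (simp add: V_def)

lemma V_add: "V W (p + (6*q+3)) = V W p"
  by (simp add: V_def)

lemma col_inj:
  assumes "RC W" "col W a = col W b"
  shows "a mod (6*q+3) = b mod (6*q+3)"
proof -
  let ?m = "6*q+3"
  have inj: "inj_on (\<lambda>i. c {W ! i, W ! ((i + 1) mod ?m)}) {..<?m}"
    using assms(1) unfolding rainbow_cycle_def by blast
  have e: "col W x = c {W ! (x mod ?m), W ! ((x mod ?m + 1) mod ?m)}" for x
    unfolding col_def V_def by (simp add: mod_Suc_eq)
  show ?thesis using inj e[of a] e[of b] assms(2)
    by (simp add: inj_on_def)
qed

lemma edge_fwd: "y = Suc x \<Longrightarrow> z = x \<Longrightarrow> c {V W x, V W y} = col W z"
  unfolding col_def by simp

lemma edge_bwd: "x = Suc y \<Longrightarrow> z = y \<Longrightarrow> c {V W x, V W y} = col W z"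
  unfolding col_def by (simp add: insert_commute)

lemma V0: "V W (6*q+3) = V W 0"
  by (simp add: V_def)

lemma edge_wf: "x = 6*q+2 \<Longrightarrow> y = 0 \<Longrightarrow> z = x \<Longrightarrow> c {V W x, V W y} = col W z"
proof -
  assume a: "x = 6*q+2" "y = 0" "z = x"
  then have h: "Suc x = 6*q+3" by simp
  show ?thesis unfolding col_def using h V0 a by metis
qed

lemma edge_wb: "x = 0 \<Longrightarrow> y = 6*q+2 \<Longrightarrow> z = y \<Longrightarrow> c {V W x, V W y} = col W z"
proof -
  assume a: "x = 0" "y = 6*q+2" "z = y"
  then have h: "Suc y = 6*q+3" by simp
  show ?thesis unfolding col_def using h V0 a by (metis insert_commute)
qed

definition ch :: "'v list \<Rightarrow> nat \<Rightarrow> nat \<Rightarrow> 'c" where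
  "ch W a b = c {V W a, V W b}"

lemma ch_comm: "ch W a b = ch W b a"
  by (simp add: ch_def insert_commute)

lemma col_eq:
  assumes "RC W" "col W a = col W b" "a < 6*q+3" "b < 6*q+3"
  shows "a = b"
  using col_inj[OF assms(1,2)] assms(3,4) by simp

lemma builder:
  assumes rcW: "RC W"
    and gl: "\<forall>i<2*q+3. g i < 6*q+3" and gi: "inj_on g {..<2*q+3}"
    and E1: "\<forall>i<2*q+2. E i = c {V W (g i), V W (g (Suc i))}"
    and E2: "E (2*q+2) = c {V W (g (2*q+2)), V W (g 0)}"
    and Ch: "Ch \<subseteq> {..<2*q+3}"
    and arcs: "\<forall>i<2*q+3. i \<notin> Ch \<longrightarrow> E i = col W (\<phi> i)"
    and phinj: "inj_on (\<lambda>i. \<phi> i mod (6*q+3)) ({..<2*q+3} - Ch)"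
  shows "\<exists>i\<in>Ch. (\<exists>j\<in>Ch. j \<noteq> i \<and> E i = E j) \<or> (\<exists>j<2*q+3. j \<notin> Ch \<and> E i = col W (\<phi> j))"
proof (rule ccontr)
  let ?n = "2*q+3" and ?m = "6*q+3"
  assume H: "\<not> ?thesis"
  have H': "E i \<noteq> E j" if "i \<in> Ch" "j < ?n" "j \<noteq> i" for i j
  proof
    assume eq: "E i = E j"
    show False
    proof (cases "j \<in> Ch")
      case True then show False using H that eq by blast
    next
      case False then show False using H that eq arcs by metis
    qed
  qed
  have injE: "inj_on E {..<?n}"
  proof (rule inj_onI)
    fix i j assume i: "i \<in> {..<?n}" and j: "j \<in> {..<?n}" and eq: "E i = E j"
    show "i = j"
    proof (rule ccontr)
      assume ne: "i \<noteq> j"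
      have "i \<notin> Ch" using H'[of i j] i j ne eq by auto
      moreover have "j \<notin> Ch" using H'[of j i] i j ne eq by auto
      ultimately have "col W (\<phi> i) = col W (\<phi> j)" using arcs i j eq by auto
      then have "\<phi> i mod ?m = \<phi> j mod ?m" using col_inj rcW by blast
      then have "i = j" using phinj \<open>i \<notin> Ch\<close> \<open>j \<notin> Ch\<close> i j by (auto simp: inj_on_def)
      then show False using ne by simp
    qed
  qed
  define vs where "vs = map (\<lambda>i. V W (g i)) [0..<?n]"
  have len: "length vs = ?n" by (simp add: vs_def)
  have lenW: "length W = ?m" and dW: "distinct W" using rcW unfolding rainbow_cycle_def by auto
  have Vg: "V W (g i) = W ! (g i)" if "i < ?n" for i using gl that by (simp add: V_def)
  have dist: "distinct vs"
    unfolding vs_def distinct_map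
  proof
    show "distinct [0..<?n]" by simp
    show "inj_on (\<lambda>i. V W (g i)) (set [0..<?n])"
    proof (rule inj_onI)
      fix i j assume "i \<in> set [0..<?n]" "j \<in> set [0..<?n]" "V W (g i) = V W (g j)"
      then have "i < ?n" "j < ?n" "W ! (g i) = W ! (g j)" using Vg by auto
      then have "g i = g j" using dW lenW gl nth_eq_iff_index_eq by metis
      then show "i = j" using gi \<open>i < ?n\<close> \<open>j < ?n\<close> by (auto simp: inj_on_def)
    qed
  qed
  have edges: "c {vs ! i, vs ! ((i + 1) mod ?n)} = E i" if "i < ?n" for i
  proof (cases "i < 2*q+2")
    case True
    then have "(i+1) mod ?n = Suc i" by simp
    then show ?thesis using True E1 unfolding vs_def by simp
  next
    case False
    then have "i = 2*q+2" using that by simp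
    then have "i + 1 = ?n" by simp
    then have "(i+1) mod ?n = 0" by (simp only: mod_self)
    then show ?thesis using E2 \<open>i = 2*q+2\<close> unfolding vs_def by simp
  qed
  have "inj_on (\<lambda>i. c {vs ! i, vs ! ((i + 1) mod ?n)}) {..<?n}"
    using injE edges by (simp add: inj_on_def)
  then have "rainbow_cycle c ?n vs" unfolding rainbow_cycle_def using len dist by simp
  then show False using NR unfolding has_rainbow_cycle_def by blast
qed

lemma tD:
  assumes "RC W"
  shows "\<exists>p. p \<le> 2*q+1 \<and> ch W 0 (2*q+2) = col W p"
proof -
  define g where "g i = i" for i :: nat
  define E where "E i = (if i < 2*q+2 then c {V W (g i), V W (g (Suc i))} else c {V W (g (2*q+2)), V W (g 0)})" for i
  define \<phi> where "\<phi> i = i" for i :: nat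
  define Ch where "Ch = {2*q+2::nat}"
  have gl: "\<forall>i<2*q+3. g i < 6*q+3" using q1 by (auto simp: g_def)
  have gi: "inj_on g {..<2*q+3}" by (auto simp: inj_on_def g_def)
  have E1: "\<forall>i<2*q+2. E i = c {V W (g i), V W (g (Suc i))}" by (simp add: E_def)
  have E2: "E (2*q+2) = c {V W (g (2*q+2)), V W (g 0)}" by (simp add: E_def)
  have Chs: "Ch \<subseteq> {..<2*q+3}" by (auto simp: Ch_def)
  have arcs: "\<forall>i<2*q+3. i \<notin> Ch \<longrightarrow> E i = col W (\<phi> i)"
  proof (intro allI impI)
    fix i assume i: "i < 2*q+3" "i \<notin> Ch"
    then have "i < 2*q+2" by (auto simp: Ch_def)
    then show "E i = col W (\<phi> i)"
      by (simp add: E_def, intro edge_fwd) (simp_all add: g_def \<phi>_def)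
  qed
  have phinj: "inj_on (\<lambda>i. \<phi> i mod (6*q+3)) ({..<2*q+3} - Ch)"
    by (auto simp: inj_on_def \<phi>_def Ch_def)
  have e1: "E (2*q+2) = ch W 0 (2*q+2)" using q1 by (simp add: E_def g_def ch_def insert_commute)
  have ph: "\<And>j. j < 2*q+3 \<Longrightarrow> j \<notin> Ch \<Longrightarrow> \<phi> j \<le> 2*q+1"
    by (auto simp: \<phi>_def Ch_def)
  from builder[OF assms gl gi E1 E2 Chs arcs phinj] ph
  show ?thesis
    unfolding Ch_def using e1 by auto
qed

lemma tX:
  assumes "RC W"
  shows "ch W 0 (2*q+2) = ch W (2*q+1) (4*q+3) \<or> (\<exists>p. (p = 2*q+1 \<or> (4*q+3 \<le> p \<and> p \<le> 6*q+2)) \<and>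
           (ch W 0 (2*q+2) = col W p \<or> ch W (2*q+1) (4*q+3) = col W p))"
proof -
  define g where "g i = (if i = 0 then 0 else if i = 1 then 2*q+2 else if i = 2 then 2*q+1 else 4*q+i)" for i :: nat
  define E where "E i = (if i < 2*q+2 then c {V W (g i), V W (g (Suc i))} else c {V W (g (2*q+2)), V W (g 0)})" for i
  define \<phi> where "\<phi> i = (if i = 1 then 2*q+1 else 4*q+i)" for i :: nat
  define Ch where "Ch = {0, 2::nat}"
  have gl: "\<forall>i<2*q+3. g i < 6*q+3" using q1 by (auto simp: g_def)
  have gi: "inj_on g {..<2*q+3}" by (auto simp: inj_on_def g_def split: if_splits)
  have E1: "\<forall>i<2*q+2. E i = c {V W (g i), V W (g (Suc i))}" by (simp add: E_def)
  have E2: "E (2*q+2) = c {V W (g (2*q+2)), V W (g 0)}" by (simp add: E_def)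
  have Chs: "Ch \<subseteq> {..<2*q+3}" by (auto simp: Ch_def)
  have arcs: "\<forall>i<2*q+3. i \<notin> Ch \<longrightarrow> E i = col W (\<phi> i)"
  proof (intro allI impI)
    fix i assume i: "i < 2*q+3" "i \<notin> Ch"
    have "(i = 1) \<or> (3 \<le> i \<and> i \<le> 2*q+1) \<or> (i = 2*q+2)" using i by (auto simp: Ch_def)
    then consider (a) "i = 1" | (b) "3 \<le> i" "i \<le> 2*q+1" | (c) "i = 2*q+2" by blast
    then show "E i = col W (\<phi> i)"
    proof cases
      case a then show ?thesis using q1 by (simp add: E_def, intro edge_bwd) (simp_all add: g_def \<phi>_def)
    next
      case b then show ?thesis using q1 by (simp add: E_def, intro edge_fwd) (simp_all add: g_def \<phi>_def)
    next
      case c then show ?thesis using q1 by (simp add: E_def, intro edge_wf) (simp_all add: g_def \<phi>_def)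
    qed
  qed
  have phinj: "inj_on (\<lambda>i. \<phi> i mod (6*q+3)) ({..<2*q+3} - Ch)"
    by (auto simp: inj_on_def \<phi>_def Ch_def split: if_splits)
  have e0: "E 0 = ch W 0 (2*q+2)" using q1 by (simp add: E_def g_def ch_def)
  have e2: "E 2 = ch W (2*q+1) (4*q+3)" using q1 by (simp add: E_def g_def ch_def)
  have ph: "\<And>j. j < 2*q+3 \<Longrightarrow> j \<notin> Ch \<Longrightarrow> \<phi> j = 2*q+1 \<or> (4*q+3 \<le> \<phi> j \<and> \<phi> j \<le> 6*q+2)"
    by (auto simp: \<phi>_def Ch_def)
  from builder[OF assms gl gi E1 E2 Chs arcs phinj] ph
  show ?thesis
    unfolding Ch_def using e0 e2 by (auto; metis)
qed

lemma tT3: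
  assumes "RC W"
  shows "ch W 1 (4*q+2) = ch W (2*q+1) (4*q+3) \<or> (\<exists>p. ((1 \<le> p \<and> p \<le> 2*q) \<or> p = 4*q+2) \<and>
           (ch W 1 (4*q+2) = col W p \<or> ch W (2*q+1) (4*q+3) = col W p))"
proof -
  define g where "g i = (if i \<le> 2*q then i+1 else if i = 2*q+1 then 4*q+3 else 4*q+2)" for i :: nat
  define E where "E i = (if i < 2*q+2 then c {V W (g i), V W (g (Suc i))} else c {V W (g (2*q+2)), V W (g 0)})" for i
  define \<phi> where "\<phi> i = (if i < 2*q then i+1 else 4*q+2)" for i :: nat
  define Ch where "Ch = {2*q, 2*q+2::nat}"
  have gl: "\<forall>i<2*q+3. g i < 6*q+3" using q1 by (auto simp: g_def)
  have gi: "inj_on g {..<2*q+3}" by (auto simp: inj_on_def g_def split: if_splits)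
  have E1: "\<forall>i<2*q+2. E i = c {V W (g i), V W (g (Suc i))}" by (simp add: E_def)
  have E2: "E (2*q+2) = c {V W (g (2*q+2)), V W (g 0)}" by (simp add: E_def)
  have Chs: "Ch \<subseteq> {..<2*q+3}" by (auto simp: Ch_def)
  have arcs: "\<forall>i<2*q+3. i \<notin> Ch \<longrightarrow> E i = col W (\<phi> i)"
  proof (intro allI impI)
    fix i assume i: "i < 2*q+3" "i \<notin> Ch"
    have "(i < 2*q) \<or> (i = 2*q+1)" using i by (auto simp: Ch_def)
    then consider (a) "i < 2*q" | (b) "i = 2*q+1" by blast
    then show "E i = col W (\<phi> i)"
    proof cases
      case a then show ?thesis using q1 by (simp add: E_def, intro edge_fwd) (simp_all add: g_def \<phi>_def)
    next
      case b then show ?thesis using q1 by (simp add: E_def, intro edge_bwd) (simp_all add: g_def \<phi>_def)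
    qed
  qed
  have phinj: "inj_on (\<lambda>i. \<phi> i mod (6*q+3)) ({..<2*q+3} - Ch)"
    by (auto simp: inj_on_def \<phi>_def Ch_def split: if_splits)
  have e0: "E (2*q) = ch W (2*q+1) (4*q+3)" using q1 by (simp add: E_def g_def ch_def)
  have e2: "E (2*q+2) = ch W 1 (4*q+2)" using q1 by (simp add: E_def g_def ch_def insert_commute)
  have ph: "\<And>j. j < 2*q+3 \<Longrightarrow> j \<notin> Ch \<Longrightarrow> (1 \<le> \<phi> j \<and> \<phi> j \<le> 2*q) \<or> \<phi> j = 4*q+2"
    by (auto simp: \<phi>_def Ch_def)
  from builder[OF assms gl gi E1 E2 Chs arcs phinj] ph
  show ?thesis
    unfolding Ch_def using e0 e2 by (auto; metis)
qed

lemma tT4: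
  assumes "RC W"
  shows "\<exists>p. (p = 0 \<or> (4*q+2 \<le> p \<and> p \<le> 6*q+2)) \<and> ch W 1 (4*q+2) = col W p"
proof -
  define g where "g i = (if i \<le> 1 then i else 4*q+i)" for i :: nat
  define E where "E i = (if i < 2*q+2 then c {V W (g i), V W (g (Suc i))} else c {V W (g (2*q+2)), V W (g 0)})" for i
  define \<phi> where "\<phi> i = (if i = 0 then 0 else 4*q+i)" for i :: nat
  define Ch where "Ch = {1::nat}"
  have gl: "\<forall>i<2*q+3. g i < 6*q+3" using q1 by (auto simp: g_def)
  have gi: "inj_on g {..<2*q+3}" by (auto simp: inj_on_def g_def split: if_splits)
  have E1: "\<forall>i<2*q+2. E i = c {V W (g i), V W (g (Suc i))}" by (simp add: E_def)
  have E2: "E (2*q+2) = c {V W (g (2*q+2)), V W (g 0)}" by (simp add: E_def)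
  have Chs: "Ch \<subseteq> {..<2*q+3}" by (auto simp: Ch_def)
  have arcs: "\<forall>i<2*q+3. i \<notin> Ch \<longrightarrow> E i = col W (\<phi> i)"
  proof (intro allI impI)
    fix i assume i: "i < 2*q+3" "i \<notin> Ch"
    have "(i = 0) \<or> (2 \<le> i \<and> i \<le> 2*q+1) \<or> (i = 2*q+2)" using i by (auto simp: Ch_def)
    then consider (a) "i = 0" | (b) "2 \<le> i" "i \<le> 2*q+1" | (c) "i = 2*q+2" by blast
    then show "E i = col W (\<phi> i)"
    proof cases
      case a then show ?thesis using q1 by (simp add: E_def, intro edge_fwd) (simp_all add: g_def \<phi>_def)
    next
      case b then show ?thesis using q1 by (simp add: E_def, intro edge_fwd) (simp_all add: g_def \<phi>_def)
    next
      case c then show ?thesis using q1 by (simp add: E_def, intro edge_wf) (simp_all add: g_def \<phi>_def)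
    qed
  qed
  have phinj: "inj_on (\<lambda>i. \<phi> i mod (6*q+3)) ({..<2*q+3} - Ch)"
    by (auto simp: inj_on_def \<phi>_def Ch_def split: if_splits)
  have e1: "E 1 = ch W 1 (4*q+2)" using q1 by (simp add: E_def g_def ch_def)
  have ph: "\<And>j. j < 2*q+3 \<Longrightarrow> j \<notin> Ch \<Longrightarrow> \<phi> j = 0 \<or> (4*q+2 \<le> \<phi> j \<and> \<phi> j \<le> 6*q+2)"
    by (auto simp: \<phi>_def Ch_def)
  from builder[OF assms gl gi E1 E2 Chs arcs phinj] ph
  show ?thesis
    unfolding Ch_def using e1 by auto
qed

lemma tT5:
  assumes "RC W"
  shows "ch W 1 (4*q+2) = ch W 0 (2*q+2) \<or> (\<exists>p. (p = 0 \<or> (2*q+2 \<le> p \<and> p \<le> 4*q+1)) \<and>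
           (ch W 1 (4*q+2) = col W p \<or> ch W 0 (2*q+2) = col W p))"
proof -
  define g where "g i = (if i \<le> 1 then i else 4*q+4-i)" for i :: nat
  define E where "E i = (if i < 2*q+2 then c {V W (g i), V W (g (Suc i))} else c {V W (g (2*q+2)), V W (g 0)})" for i
  define \<phi> where "\<phi> i = (if i = 0 then 0 else 4*q+3-i)" for i :: nat
  define Ch where "Ch = {1, 2*q+2::nat}"
  have gl: "\<forall>i<2*q+3. g i < 6*q+3" using q1 by (auto simp: g_def)
  have gi: "inj_on g {..<2*q+3}" by (auto simp: inj_on_def g_def split: if_splits)
  have E1: "\<forall>i<2*q+2. E i = c {V W (g i), V W (g (Suc i))}" by (simp add: E_def)
  have E2: "E (2*q+2) = c {V W (g (2*q+2)), V W (g 0)}" by (simp add: E_def)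
  have Chs: "Ch \<subseteq> {..<2*q+3}" by (auto simp: Ch_def)
  have arcs: "\<forall>i<2*q+3. i \<notin> Ch \<longrightarrow> E i = col W (\<phi> i)"
  proof (intro allI impI)
    fix i assume i: "i < 2*q+3" "i \<notin> Ch"
    have "(i = 0) \<or> (2 \<le> i \<and> i \<le> 2*q+1)" using i by (auto simp: Ch_def)
    then consider (a) "i = 0" | (b) "2 \<le> i" "i \<le> 2*q+1" by blast
    then show "E i = col W (\<phi> i)"
    proof cases
      case a then show ?thesis using q1 by (simp add: E_def, intro edge_fwd) (simp_all add: g_def \<phi>_def)
    next
      case b then show ?thesis using q1 by (simp add: E_def, intro edge_bwd) (simp_all add: g_def \<phi>_def)
    qed
  qed
  have phinj: "inj_on (\<lambda>i. \<phi> i mod (6*q+3)) ({..<2*q+3} - Ch)"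
    by (auto simp: inj_on_def \<phi>_def Ch_def split: if_splits)
  have e1: "E 1 = ch W 1 (4*q+2)" using q1 by (simp add: E_def g_def ch_def)
  have e2: "E (2*q+2) = ch W 0 (2*q+2)" using q1 by (simp add: E_def g_def ch_def insert_commute)
  have ph: "\<And>j. j < 2*q+3 \<Longrightarrow> j \<notin> Ch \<Longrightarrow> \<phi> j = 0 \<or> (2*q+2 \<le> \<phi> j \<and> \<phi> j \<le> 4*q+1)"
    by (auto simp: \<phi>_def Ch_def)
  from builder[OF assms gl gi E1 E2 Chs arcs phinj] ph
  show ?thesis
    unfolding Ch_def using e1 e2 by (auto; metis)
qed

lemma modinj_gen:
  fixes a b m :: nat
  assumes "a mod m = b mod m" "b \<le> a" "a - b < m"
  shows "a = b"
proof -
  have "m dvd a - b" using assms(1,2) by (simp add: mod_eq_dvd_iff_nat)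
  then have "a - b = 0" using assms(3) by (metis dvd_imp_le not_le zero_less_iff_neq_zero)
  then show ?thesis using assms(2) by simp
qed

lemma modinj_sum:
  fixes i j r m :: nat
  assumes "i < m" "j < m" "(i + r) mod m = (j + r) mod m"
  shows "i = j"
proof (cases "j \<le> i")
  case True
  have "i - j < m" using assms(1) by linarith
  then have "i + r = j + r" using modinj_gen[of "i+r" m "j+r"] assms True by simp
  then show ?thesis by simp
next
  case False
  have "j - i < m" using assms(2) by linarith
  then have "j + r = i + r" using modinj_gen[of "j+r" m "i+r"] assms False by simp
  then show ?thesis by simp
qed

lemma modinj_diffg:
  fixes i j t m :: nat
  assumes "i < m" "j < m" "i \<le> t" "j \<le> t" "(t - i) mod m = (t - j) mod m"
  shows "i = j"
proof (cases "j \<le> i")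
  case True
  then have "t - j = t - i" using modinj_gen[OF assms(5)[symmetric]] assms by simp
  then show ?thesis using assms by simp
next
  case False
  then have "t - i = t - j" using modinj_gen[OF assms(5)] assms by simp
  then show ?thesis using assms by simp
qed

lemma modinj_diff:
  fixes i j s m :: nat
  assumes "i < m" "j < m" "(s + m - i) mod m = (s + m - j) mod m"
  shows "i = j"
  using modinj_diffg[OF assms(1,2) _ _ assms(3)] assms(1,2) by simp

definition rot :: "'v list \<Rightarrow> nat \<Rightarrow> 'v list" where
  "rot W r = map (\<lambda>j. V W (j + r)) [0..<6*q+3]"

lemma rot_V: "V (rot W r) x = V W (x + r)"
  by (simp add: V_def rot_def mod_add_left_eq)

lemma rot_col: "col (rot W r) x = col W (x + r)"
  unfolding col_def rot_V by simp

lemma rot_ch: "ch (rot W r) a b = ch W (a + r) (b + r)"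
  unfolding ch_def rot_V by simp

lemma rot_RC:
  assumes "RC W"
  shows "RC (rot W r)"
proof -
  let ?m = "6*q+3"
  have lenW: "length W = ?m" and dW: "distinct W" using assms unfolding rainbow_cycle_def by auto
  have len: "length (rot W r) = ?m" by (simp add: rot_def)
  have dist: "distinct (rot W r)"
    unfolding rot_def distinct_map
  proof
    show "distinct [0..<?m]" by simp
    show "inj_on (\<lambda>j. V W (j + r)) (set [0..<?m])"
    proof (rule inj_onI)
      fix i j assume ij: "i \<in> set [0..<?m]" "j \<in> set [0..<?m]" "V W (i + r) = V W (j + r)"
      then have "W ! ((i + r) mod ?m) = W ! ((j + r) mod ?m)" by (simp add: V_def)
      moreover have "(i + r) mod ?m < length W" "(j + r) mod ?m < length W" using lenW by simp_all
      ultimately have "(i + r) mod ?m = (j + r) mod ?m" using dW nth_eq_iff_index_eq by blast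
      then show "i = j" using modinj_sum ij by simp
    qed
  qed
  have eqc: "c {rot W r ! i, rot W r ! ((i + 1) mod ?m)} = col (rot W r) i" if "i < ?m" for i
  proof -
    have "rot W r ! i = V (rot W r) i" using that len by (simp add: V_def)
    moreover have "rot W r ! ((i + 1) mod ?m) = V (rot W r) (Suc i)" using len by (simp add: V_def)
    ultimately show ?thesis by (simp add: col_def)
  qed
  have inj: "inj_on (\<lambda>i. c {rot W r ! i, rot W r ! ((i + 1) mod ?m)}) {..<?m}"
  proof (rule inj_onI)
    fix i j assume ij: "i \<in> {..<?m}" "j \<in> {..<?m}"
      "c {rot W r ! i, rot W r ! ((i + 1) mod ?m)} = c {rot W r ! j, rot W r ! ((j + 1) mod ?m)}"
    then have "col W (i + r) = col W (j + r)" using eqc rot_col by simp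
    then have "(i + r) mod ?m = (j + r) mod ?m" using col_inj assms by blast
    then show "i = j" using modinj_sum ij by simp
  qed
  show ?thesis unfolding rainbow_cycle_def using len dist inj by simp
qed

definition refl :: "'v list \<Rightarrow> nat \<Rightarrow> 'v list" where
  "refl W s = map (\<lambda>j. V W (s + (6*q+3) - j)) [0..<6*q+3]"

lemma refl_V: "x < 6*q+3 \<Longrightarrow> V (refl W s) x = V W (s + (6*q+3) - x)"
  by (simp add: V_def refl_def)

lemma refl_col:
  assumes "x < 6*q+3"
  shows "col (refl W s) x = col W (s + (6*q+3) - Suc x)"
proof (cases "Suc x < 6*q+3")
  case True
  have "V (refl W s) x = V W (Suc (s + (6*q+3) - Suc x))" using refl_V assms True
    by (metis Suc_diff_Suc add_less_imp_less_left diff_Suc_Suc less_add_Suc2 trans_less_add2)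
  then show ?thesis using True refl_V[OF True] unfolding col_def by (simp add: insert_commute)
next
  case False
  then have x: "Suc x = 6*q+3" using assms by simp
  have a: "V (refl W s) (Suc x) = V W s"
  proof -
    have "V (refl W s) (Suc x) = V (refl W s) 0" unfolding V_def x by simp
    also have "\<dots> = V W (s + (6*q+3))" using refl_V[of 0] by simp
    also have "\<dots> = V W s" by (simp add: V_add)
    finally show ?thesis .
  qed
  have b: "V (refl W s) x = V W (Suc s)" using refl_V[OF assms] x by simp
  have d: "s + (6*q+3) - Suc x = s" using x by simp
  show ?thesis unfolding col_def d a b by (simp add: insert_commute)
qed

lemma refl_RC:
  assumes "RC W"
  shows "RC (refl W s)"
proof -
  let ?m = "6*q+3"
  have lenW: "length W = ?m" and dW: "distinct W" using assms unfolding rainbow_cycle_def by auto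
  have len: "length (refl W s) = ?m" by (simp add: refl_def)
  have dist: "distinct (refl W s)"
    unfolding refl_def distinct_map
  proof
    show "distinct [0..<?m]" by simp
    show "inj_on (\<lambda>j. V W (s + ?m - j)) (set [0..<?m])"
    proof (rule inj_onI)
      fix i j assume ij: "i \<in> set [0..<?m]" "j \<in> set [0..<?m]" "V W (s + ?m - i) = V W (s + ?m - j)"
      then have "W ! ((s + ?m - i) mod ?m) = W ! ((s + ?m - j) mod ?m)" by (simp add: V_def)
      moreover have "(s + ?m - i) mod ?m < length W" "(s + ?m - j) mod ?m < length W" using lenW by simp_all
      ultimately have "(s + ?m - i) mod ?m = (s + ?m - j) mod ?m" using dW nth_eq_iff_index_eq by blast
      then show "i = j" using modinj_diff ij by simp
    qed
  qed
  have eqc: "c {refl W s ! i, refl W s ! ((i + 1) mod ?m)} = col (refl W s) i" if "i < ?m" for i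
  proof -
    have "refl W s ! i = V (refl W s) i" using that len by (simp add: V_def)
    moreover have "refl W s ! ((i + 1) mod ?m) = V (refl W s) (Suc i)" using len by (simp add: V_def)
    ultimately show ?thesis by (simp add: col_def)
  qed
  have inj: "inj_on (\<lambda>i. c {refl W s ! i, refl W s ! ((i + 1) mod ?m)}) {..<?m}"
  proof (rule inj_onI)
    fix i j assume ij: "i \<in> {..<?m}" "j \<in> {..<?m}"
      "c {refl W s ! i, refl W s ! ((i + 1) mod ?m)} = c {refl W s ! j, refl W s ! ((j + 1) mod ?m)}"
    then have "col W (s + ?m - Suc i) = col W (s + ?m - Suc j)" using eqc refl_col by simp
    then have "(s + ?m - Suc i) mod ?m = (s + ?m - Suc j) mod ?m" using col_inj assms by blast
    moreover have "s + ?m - Suc i = (s + ?m - 1) - i" "s + ?m - Suc j = (s + ?m - 1) - j" by simp_all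
    ultimately have "((s + ?m - 1) - i) mod ?m = ((s + ?m - 1) - j) mod ?m" by simp
    then show "i = j" using ij by (intro modinj_diffg[of i ?m j "s + ?m - 1"]) auto
  qed
  show ?thesis unfolding rainbow_cycle_def using len dist inj by simp
qed

lemma Vm: "6*q+3 \<le> x \<Longrightarrow> V W x = V W (x - (6*q+3))"
  by (simp add: V_def le_mod_geq)

lemma colm: "6*q+3 \<le> x \<Longrightarrow> col W x = col W (x - (6*q+3))"
  unfolding col_def using Vm by (metis Suc_diff_le le_SucI)

lemma ceqI:
  assumes "RC W" "x = col W a" "x = col W b" "a < 6*q+3" "b < 6*q+3"
  shows "a = b"
  using col_eq[OF assms(1)] assms(2-5) by simp

lemma P1:
  assumes rc: "RC W"
  shows "ch W 0 (2*q+2) = col W 0 \<or> ch W 0 (2*q+2) = col W (2*q+1)"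
proof (rule ccontr)
  assume H: "\<not> ?thesis"
  have ceq: "\<And>a b. col W a = col W b \<Longrightarrow> a < 6*q+3 \<Longrightarrow> b < 6*q+3 \<Longrightarrow> a = b"
    using col_eq[OF rc] by blast
  obtain p0 where p0: "p0 \<le> 2*q+1" "ch W 0 (2*q+2) = col W p0" using tD[OF rc] by blast
  have rcr: "RC (rot W (2*q+1))" using rot_RC[OF rc] .
  obtain p1 where p1: "p1 \<le> 2*q+1" "ch (rot W (2*q+1)) 0 (2*q+2) = col (rot W (2*q+1)) p1"
    using tD[OF rcr] by blast
  have p1': "ch W (2*q+1) (4*q+3) = col W (p1 + (2*q+1))"
  proof -
    have a: "ch (rot W (2*q+1)) 0 (2*q+2) = ch W (2*q+1) (4*q+3)"
      unfolding rot_ch by (intro arg_cong2[where f="ch W"]) simp_all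
    show ?thesis using p1(2) unfolding a rot_col .
  qed
  have p0r: "1 \<le> p0 \<and> p0 \<le> 2*q"
  proof -
    have "p0 \<noteq> 0" using H p0 by metis
    moreover have "p0 \<noteq> 2*q+1" using H p0 by metis
    ultimately show ?thesis using p0 by simp
  qed
  have B: "ch W (2*q+1) (4*q+3) = col W (2*q+1)"
  proof -
    from tX[OF rc] consider (e) "ch W 0 (2*q+2) = ch W (2*q+1) (4*q+3)"
      | (a) p where "p = 2*q+1 \<or> (4*q+3 \<le> p \<and> p \<le> 6*q+2)" "ch W 0 (2*q+2) = col W p"
      | (b) p where "p = 2*q+1 \<or> (4*q+3 \<le> p \<and> p \<le> 6*q+2)" "ch W (2*q+1) (4*q+3) = col W p"
      by blast
    then show ?thesis
    proof cases
      case e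
      have "p0 = p1 + (2*q+1)" by (rule ceqI[OF rc p0(2)]) (use e p1' p1(1) p0(1) in auto)+
      then show ?thesis using p0r by simp
    next
      case (a p)
      have "p0 = p" by (rule ceqI[OF rc p0(2) a(2)]) (use p0(1) a(1) in auto)+
      then show ?thesis using p0r a by simp
    next
      case (b p)
      have "p1 + (2*q+1) = p" by (rule ceqI[OF rc p1' b(2)]) (use p1(1) b(1) in auto)+
      then have "p = 2*q+1" using b p1(1) by simp
      then show ?thesis using b by simp
    qed
  qed
  obtain pf where pf: "(1 \<le> pf \<and> pf \<le> 2*q+1) \<or> pf = 4*q+2" "ch W 1 (4*q+2) = col W pf"
  proof -
    from tT3[OF rc] consider (e) "ch W 1 (4*q+2) = ch W (2*q+1) (4*q+3)"
      | (a) p where "(1 \<le> p \<and> p \<le> 2*q) \<or> p = 4*q+2" "ch W 1 (4*q+2) = col W p"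
      | (b) p where "(1 \<le> p \<and> p \<le> 2*q) \<or> p = 4*q+2" "ch W (2*q+1) (4*q+3) = col W p"
      by blast
    then show ?thesis
    proof cases
      case e then show ?thesis using B by (intro that[of "2*q+1"]) auto
    next
      case (a p) then show ?thesis by (intro that[of p]) auto
    next
      case (b p)
      have "2*q+1 = p" by (rule ceqI[OF rc B b(2)]) (use b(1) in auto)+
      then show ?thesis using b by simp
    qed
  qed
  obtain p4 where p4: "p4 = 0 \<or> (4*q+2 \<le> p4 \<and> p4 \<le> 6*q+2)" "ch W 1 (4*q+2) = col W p4"
    using tT4[OF rc] by blast
  have "pf = p4" by (rule ceqI[OF rc pf(2) p4(2)]) (use pf(1) p4(1) in auto)+
  then have pf4: "pf = 4*q+2" using pf(1) p4(1) by auto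
  from tT5[OF rc] consider (e) "ch W 1 (4*q+2) = ch W 0 (2*q+2)"
      | (a) p where "p = 0 \<or> (2*q+2 \<le> p \<and> p \<le> 4*q+1)" "ch W 1 (4*q+2) = col W p"
      | (b) p where "p = 0 \<or> (2*q+2 \<le> p \<and> p \<le> 4*q+1)" "ch W 0 (2*q+2) = col W p"
    by blast
  then show False
  proof cases
    case e
    have "pf = p0" by (rule ceqI[OF rc pf(2)]) (use e p0 pf(1) in auto)+
    then show False using pf4 p0r by simp
  next
    case (a p)
    have "pf = p" by (rule ceqI[OF rc pf(2) a(2)]) (use pf(1) a(1) in auto)+
    then show False using pf4 a by simp
  next
    case (b p)
    have "p0 = p" by (rule ceqI[OF rc p0(2) b(2)]) (use p0(1) b(1) in auto)+
    then show False using p0r b by simp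
  qed
qed


lemma ceqM:
  assumes "RC W" "x = col W a" "x = col W b" "a < 2*(6*q+3)" "b < 2*(6*q+3)"
  shows "a = b \<or> a = b + (6*q+3) \<or> b = a + (6*q+3)"
  using modeq2[OF assms(4,5) col_inj[OF assms(1)]] assms(2,3) by simp

lemma Xrot:
  assumes "RC W"
  shows "ch W r (2*q+2+r) = ch W (2*q+1+r) (4*q+3+r) \<or> (\<exists>p. (p = 2*q+1 \<or> (4*q+3 \<le> p \<and> p \<le> 6*q+2)) \<and>
           (ch W r (2*q+2+r) = col W (p+r) \<or> ch W (2*q+1+r) (4*q+3+r) = col W (p+r)))"
  using tX[OF rot_RC[OF assms, of r]] unfolding rot_ch rot_col by simp

lemma triple:
  assumes rc: "RC W"
  shows "(ch W 0 (2*q+2) = col W 0 \<and> ch W (2*q+1) (4*q+3) = col W (2*q+1) \<and> ch W (4*q+2) 1 = col W (4*q+2))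
       \<or> (ch W 0 (2*q+2) = col W (2*q+1) \<and> ch W (2*q+1) (4*q+3) = col W (4*q+2) \<and> ch W (4*q+2) 1 = col W 0)"
proof -
  define A0 where "A0 = ch W 0 (2*q+2)"
  define A1 where "A1 = ch W (2*q+1) (4*q+3)"
  define A2 where "A2 = ch W (4*q+2) 1"
  have r1: "RC (rot W (2*q+1))" and r2: "RC (rot W (4*q+2))" using rot_RC[OF rc] by auto
  have P0: "A0 = col W 0 \<or> A0 = col W (2*q+1)" using P1[OF rc] unfolding A0_def .
  have Pa: "A1 = col W (2*q+1) \<or> A1 = col W (4*q+2)"
  proof -
    have a: "ch (rot W (2*q+1)) 0 (2*q+2) = ch W (2*q+1) (4*q+3)"
      unfolding rot_ch by (intro arg_cong2[where f="ch W"]) simp_all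
    have b: "col (rot W (2*q+1)) 0 = col W (2*q+1)" "col (rot W (2*q+1)) (2*q+1) = col W (4*q+2)"
      by (simp_all add: rot_col)
    show ?thesis using P1[OF r1] unfolding a b A1_def .
  qed
  have v: "V W (2*q+2 + (4*q+2)) = V W 1" using Vm[of "2*q+2 + (4*q+2)" W] by simp
  have Pb: "A2 = col W (4*q+2) \<or> A2 = col W 0"
  proof -
    have a: "ch (rot W (4*q+2)) 0 (2*q+2) = ch W (4*q+2) 1"
      unfolding ch_def rot_V v by simp
    have b: "col (rot W (4*q+2)) 0 = col W (4*q+2)" "col (rot W (4*q+2)) (2*q+1) = col W 0"
      unfolding rot_col using colm[of "2*q+1 + (4*q+2)" W] by simp_all
    show ?thesis using P1[OF r2] unfolding a b A2_def .
  qed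
  have n01: "col W 0 \<noteq> col W (2*q+1)" "col W (2*q+1) \<noteq> col W (4*q+2)" "col W 0 \<noteq> col W (4*q+2)"
    using col_eq[OF rc, of 0 "2*q+1"] col_eq[OF rc, of "2*q+1" "4*q+2"] col_eq[OF rc, of 0 "4*q+2"] by auto
  have X0: "A0 = col W (2*q+1) \<or> A1 = col W (2*q+1)"
  proof -
    from tX[OF rc] consider (e) "A0 = A1"
      | (a) p where "p = 2*q+1 \<or> (4*q+3 \<le> p \<and> p \<le> 6*q+2)" "A0 = col W p"
      | (b) p where "p = 2*q+1 \<or> (4*q+3 \<le> p \<and> p \<le> 6*q+2)" "A1 = col W p"
      unfolding A0_def A1_def by blast
    then show ?thesis
    proof cases
      case e then show ?thesis using P0 Pa n01 by auto
    next
      case (a p)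
      show ?thesis
      proof (cases "A0 = col W 0")
        case True
        have "p = 0" by (rule ceqI[OF rc a(2)]) (use True a(1) in auto)+
        then show ?thesis using a(1) by simp
      next
        case False then show ?thesis using P0 by simp
      qed
    next
      case (b p)
      show ?thesis
      proof (cases "A1 = col W (4*q+2)")
        case True
        have "p = 4*q+2" by (rule ceqI[OF rc b(2)]) (use True b(1) in auto)+
        then show ?thesis using b(1) by simp
      qed (use Pa in simp)
    qed
  qed
  have X1: "A1 = col W (4*q+2) \<or> A2 = col W (4*q+2)"
  proof -
    have a: "ch W (2*q+1) (2*q+2+(2*q+1)) = A1" unfolding A1_def
      by (intro arg_cong2[where f="ch W"]) simp_all
    have b: "ch W (2*q+1+(2*q+1)) (4*q+3+(2*q+1)) = A2" unfolding A2_def ch_def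
      using Vm[of "4*q+3+(2*q+1)" W] by (simp add: insert_commute)
    from Xrot[OF rc, of "2*q+1", unfolded a b] consider (e) "A1 = A2"
      | (a) p where "p = 2*q+1 \<or> (4*q+3 \<le> p \<and> p \<le> 6*q+2)" "A1 = col W (p + (2*q+1))"
      | (b) p where "p = 2*q+1 \<or> (4*q+3 \<le> p \<and> p \<le> 6*q+2)" "A2 = col W (p + (2*q+1))"
      by blast
    then show ?thesis
    proof cases
      case e then show ?thesis using Pa Pb n01 by auto
    next
      case (a p)
      show ?thesis
      proof (cases "A1 = col W (2*q+1)")
        case True
        have "p + (2*q+1) = 2*q+1 \<or> p + (2*q+1) = 2*q+1 + (6*q+3) \<or> 2*q+1 = p + (2*q+1) + (6*q+3)"
          by (rule ceqM[OF rc a(2) True]) (use a(1) in auto)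
        then show ?thesis using a(1) by auto
      next
        case False then show ?thesis using Pa by simp
      qed
    next
      case (b p)
      show ?thesis
      proof (cases "A2 = col W 0")
        case True
        have "p + (2*q+1) = 0 \<or> p + (2*q+1) = 0 + (6*q+3) \<or> 0 = p + (2*q+1) + (6*q+3)"
          by (rule ceqM[OF rc b(2) True]) (use b(1) in auto)
        then show ?thesis using b(1) by auto
      next
        case False then show ?thesis using Pb by simp
      qed
    qed
  qed
  have X2: "A2 = col W 0 \<or> A0 = col W 0"
  proof -
    have a: "ch W (4*q+2) (2*q+2+(4*q+2)) = A2" unfolding A2_def ch_def using v by simp
    have b: "ch W (2*q+1+(4*q+2)) (4*q+3+(4*q+2)) = A0" unfolding A0_def ch_def
      using Vm[of "4*q+3+(4*q+2)" W] Vm[of "2*q+1+(4*q+2)" W] by simp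
    have c0: "col W (6*q+3) = col W 0" using colm[of "6*q+3" W] by simp
    from Xrot[OF rc, of "4*q+2", unfolded a b] consider (e) "A2 = A0"
      | (a) p where "p = 2*q+1 \<or> (4*q+3 \<le> p \<and> p \<le> 6*q+2)" "A2 = col W (p + (4*q+2))"
      | (b) p where "p = 2*q+1 \<or> (4*q+3 \<le> p \<and> p \<le> 6*q+2)" "A0 = col W (p + (4*q+2))"
      by blast
    then show ?thesis
    proof cases
      case e then show ?thesis using P0 Pb n01 by auto
    next
      case (a p)
      show ?thesis
      proof (cases "A2 = col W (4*q+2)")
        case True
        have "p + (4*q+2) = 4*q+2 \<or> p + (4*q+2) = 4*q+2 + (6*q+3) \<or> 4*q+2 = p + (4*q+2) + (6*q+3)"
          by (rule ceqM[OF rc a(2) True]) (use a(1) in auto)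
        then show ?thesis using a(1) by auto
      next
        case False then show ?thesis using Pb by simp
      qed
    next
      case (b p)
      show ?thesis
      proof (cases "A0 = col W (2*q+1)")
        case True
        have "p + (4*q+2) = 2*q+1 \<or> p + (4*q+2) = 2*q+1 + (6*q+3) \<or> 2*q+1 = p + (4*q+2) + (6*q+3)"
          by (rule ceqM[OF rc b(2) True]) (use b(1) in auto)
        then show ?thesis using b(1) by auto
      next
        case False then show ?thesis using P0 by simp
      qed
    qed
  qed
  have "(A0 = col W 0 \<and> A1 = col W (2*q+1) \<and> A2 = col W (4*q+2))
       \<or> (A0 = col W (2*q+1) \<and> A1 = col W (4*q+2) \<and> A2 = col W 0)"
  proof (cases "A0 = col W 0")
    case True
    then have "A0 \<noteq> col W (2*q+1)" using n01 by simp
    then have "A1 = col W (2*q+1)" using X0 by simp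
    then have "A1 \<noteq> col W (4*q+2)" using n01 by simp
    then have "A2 = col W (4*q+2)" using X1 by simp
    then show ?thesis using True \<open>A1 = col W (2*q+1)\<close> by simp
  next
    case False
    then have "A0 = col W (2*q+1)" using P0 by simp
    have "A2 = col W 0" using X2 False by simp
    then have "A2 \<noteq> col W (4*q+2)" using n01 by simp
    then have "A1 = col W (4*q+2)" using X1 by simp
    then show ?thesis using \<open>A0 = col W (2*q+1)\<close> \<open>A2 = col W 0\<close> by simp
  qed
  then show ?thesis unfolding A0_def A1_def A2_def .
qed

lemma chI: "a = a' \<Longrightarrow> b = b' \<Longrightarrow> c {V W a, V W b} = ch W a' b'"
  by (simp add: ch_def)

lemma chI': "a = b' \<Longrightarrow> b = a' \<Longrightarrow> c {V W a, V W b} = ch W a' b'"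
  by (simp add: ch_def insert_commute)

lemma chA: "ch W a' b' = col W p \<Longrightarrow> a = a' \<Longrightarrow> b = b' \<Longrightarrow> p' = p \<Longrightarrow> c {V W a, V W b} = col W p'"
  by (simp add: ch_def)

lemma tC1:
  assumes rc: "RC W"
  shows "ch W (3*q+2) (5*q+3) = ch W (q+1) (5*q+3) \<or> (\<exists>p. q+1 \<le> p \<and> p \<le> 3*q+1 \<and> (ch W (3*q+2) (5*q+3) = col W p \<or> ch W (q+1) (5*q+3) = col W p))"
proof -
  define g where "g i = (if i \<le> 2*q+1 then q+1+i else 5*q+3)" for i :: nat
  define E where "E i = (if i < 2*q+2 then c {V W (g i), V W (g (Suc i))} else c {V W (g (2*q+2)), V W (g 0)})" for i
  define \<phi> where "\<phi> i = (q+1+i)" for i :: nat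
  define Ch where "Ch = {2*q+1, 2*q+2::nat}"
  have gl: "\<forall>i<2*q+3. g i < 6*q+3" using q1 by (auto simp: g_def)
  have gi: "inj_on g {..<2*q+3}" using q1 by (auto simp: inj_on_def g_def split: if_splits)
  have E1: "\<forall>i<2*q+2. E i = c {V W (g i), V W (g (Suc i))}" by (simp add: E_def)
  have E2: "E (2*q+2) = c {V W (g (2*q+2)), V W (g 0)}" by (simp add: E_def)
  have Chs: "Ch \<subseteq> {..<2*q+3}" by (auto simp: Ch_def)
  have arcs: "\<forall>i<2*q+3. i \<notin> Ch \<longrightarrow> E i = col W (\<phi> i)"
  proof (intro allI impI)
    fix i assume i: "i < 2*q+3" "i \<notin> Ch"
    have "(i \<le> 2*q)" using i q1 by (auto simp: Ch_def)
    then consider (c0) "i \<le> 2*q" by blast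
    then show "E i = col W (\<phi> i)"
    proof cases
      case c0 then show ?thesis using q1 by (simp add: E_def, intro edge_fwd) (simp_all add: g_def \<phi>_def)
    qed
  qed
  have phinj: "inj_on (\<lambda>i. \<phi> i mod (6*q+3)) ({..<2*q+3} - Ch)"
    using q1 by (auto simp: inj_on_def \<phi>_def Ch_def split: if_splits)
  have e0: "E (2*q+1) = ch W (3*q+2) (5*q+3)" using q1 by (simp add: E_def, intro chI) (simp_all add: g_def)
  have e1: "E (2*q+2) = ch W (q+1) (5*q+3)" using q1 by (simp add: E_def, intro chI') (simp_all add: g_def)
  have ph: "\<And>j. j < 2*q+3 \<Longrightarrow> j \<notin> Ch \<Longrightarrow> q+1 \<le> \<phi> j \<and> \<phi> j \<le> 3*q+1"
    using q1 by (auto simp: \<phi>_def Ch_def)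
  from builder[OF rc gl gi E1 E2 Chs arcs phinj] ph
  show ?thesis
    unfolding Ch_def using e0 e1 by (auto; metis)
qed

lemma tC2:
  assumes rc: "RC W"
  shows "ch W (q+1) (5*q+3) = ch W (q+1) (3*q+2) \<or> (\<exists>p. 3*q+2 \<le> p \<and> p \<le> 5*q+2 \<and> (ch W (q+1) (5*q+3) = col W p \<or> ch W (q+1) (3*q+2) = col W p))"
proof -
  define g where "g i = (if i \<le> 2*q+1 then 3*q+2+i else q+1)" for i :: nat
  define E where "E i = (if i < 2*q+2 then c {V W (g i), V W (g (Suc i))} else c {V W (g (2*q+2)), V W (g 0)})" for i
  define \<phi> where "\<phi> i = (3*q+2+i)" for i :: nat
  define Ch where "Ch = {2*q+1, 2*q+2::nat}"
  have gl: "\<forall>i<2*q+3. g i < 6*q+3" using q1 by (auto simp: g_def)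
  have gi: "inj_on g {..<2*q+3}" using q1 by (auto simp: inj_on_def g_def split: if_splits)
  have E1: "\<forall>i<2*q+2. E i = c {V W (g i), V W (g (Suc i))}" by (simp add: E_def)
  have E2: "E (2*q+2) = c {V W (g (2*q+2)), V W (g 0)}" by (simp add: E_def)
  have Chs: "Ch \<subseteq> {..<2*q+3}" by (auto simp: Ch_def)
  have arcs: "\<forall>i<2*q+3. i \<notin> Ch \<longrightarrow> E i = col W (\<phi> i)"
  proof (intro allI impI)
    fix i assume i: "i < 2*q+3" "i \<notin> Ch"
    have "(i \<le> 2*q)" using i q1 by (auto simp: Ch_def)
    then consider (c0) "i \<le> 2*q" by blast
    then show "E i = col W (\<phi> i)"
    proof cases
      case c0 then show ?thesis using q1 by (simp add: E_def, intro edge_fwd) (simp_all add: g_def \<phi>_def)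
    qed
  qed
  have phinj: "inj_on (\<lambda>i. \<phi> i mod (6*q+3)) ({..<2*q+3} - Ch)"
    using q1 by (auto simp: inj_on_def \<phi>_def Ch_def split: if_splits)
  have e0: "E (2*q+1) = ch W (q+1) (5*q+3)" using q1 by (simp add: E_def, intro chI') (simp_all add: g_def)
  have e1: "E (2*q+2) = ch W (q+1) (3*q+2)" using q1 by (simp add: E_def, intro chI) (simp_all add: g_def)
  have ph: "\<And>j. j < 2*q+3 \<Longrightarrow> j \<notin> Ch \<Longrightarrow> 3*q+2 \<le> \<phi> j \<and> \<phi> j \<le> 5*q+2"
    using q1 by (auto simp: \<phi>_def Ch_def)
  from builder[OF rc gl gi E1 E2 Chs arcs phinj] ph
  show ?thesis
    unfolding Ch_def using e0 e1 by (auto; metis)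
qed

lemma tC3:
  assumes rc: "RC W"
  shows "ch W (q+1) (3*q+2) = ch W (3*q+2) (5*q+3) \<or> (\<exists>p. (5*q+3 \<le> p \<and> p \<le> 6*q+2 \<or> p \<le> q) \<and> (ch W (q+1) (3*q+2) = col W p \<or> ch W (3*q+2) (5*q+3) = col W p))"
proof -
  define g where "g i = (if i < q then 5*q+3+i else if i \<le> 2*q+1 then i - q else 3*q+2)" for i :: nat
  define E where "E i = (if i < 2*q+2 then c {V W (g i), V W (g (Suc i))} else c {V W (g (2*q+2)), V W (g 0)})" for i
  define \<phi> where "\<phi> i = (if i < q then 5*q+3+i else i - q)" for i :: nat
  define Ch where "Ch = {2*q+1, 2*q+2::nat}"
  have gl: "\<forall>i<2*q+3. g i < 6*q+3" using q1 by (auto simp: g_def)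
  have gi: "inj_on g {..<2*q+3}" using q1 by (auto simp: inj_on_def g_def split: if_splits)
  have E1: "\<forall>i<2*q+2. E i = c {V W (g i), V W (g (Suc i))}" by (simp add: E_def)
  have E2: "E (2*q+2) = c {V W (g (2*q+2)), V W (g 0)}" by (simp add: E_def)
  have Chs: "Ch \<subseteq> {..<2*q+3}" by (auto simp: Ch_def)
  have arcs: "\<forall>i<2*q+3. i \<notin> Ch \<longrightarrow> E i = col W (\<phi> i)"
  proof (intro allI impI)
    fix i assume i: "i < 2*q+3" "i \<notin> Ch"
    have "(Suc i < q) \<or> (Suc i = q) \<or> (q \<le> i \<and> i \<le> 2*q)" using i q1 by (auto simp: Ch_def)
    then consider (c0) "Suc i < q" | (c1) "Suc i = q" | (c2) "q \<le> i" "i \<le> 2*q" by blast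
    then show "E i = col W (\<phi> i)"
    proof cases
      case c0 then show ?thesis using q1 by (simp add: E_def, intro edge_fwd) (simp_all add: g_def \<phi>_def)
    next
      case c1 then show ?thesis using q1 by (simp add: E_def, intro edge_wf) (simp_all add: g_def \<phi>_def)
    next
      case c2 then show ?thesis using q1 by (simp add: E_def, intro edge_fwd) (simp_all add: g_def \<phi>_def)
    qed
  qed
  have phinj: "inj_on (\<lambda>i. \<phi> i mod (6*q+3)) ({..<2*q+3} - Ch)"
    using q1 by (auto simp: inj_on_def \<phi>_def Ch_def split: if_splits)
  have e0: "E (2*q+1) = ch W (q+1) (3*q+2)" using q1 by (simp add: E_def, intro chI) (simp_all add: g_def)
  have e1: "E (2*q+2) = ch W (3*q+2) (5*q+3)" using q1 by (simp add: E_def, intro chI) (simp_all add: g_def)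
  have ph: "\<And>j. j < 2*q+3 \<Longrightarrow> j \<notin> Ch \<Longrightarrow> 5*q+3 \<le> \<phi> j \<and> \<phi> j \<le> 6*q+2 \<or> \<phi> j \<le> q"
    using q1 by (auto simp: \<phi>_def Ch_def)
  from builder[OF rc gl gi E1 E2 Chs arcs phinj] ph
  show ?thesis
    unfolding Ch_def using e0 e1 by (auto; metis)
qed

lemma tS1:
  assumes rc: "RC W"
    and hA: "ch W (4*q+2) 1 = col W (4*q+2)"
  shows "ch W (q+1) (5*q+3) = ch W (3*q+2) (5*q+3) \<or> (\<exists>p. (3*q+2 \<le> p \<and> p \<le> 4*q+2 \<or> 1 \<le> p \<and> p \<le> q) \<and> (ch W (q+1) (5*q+3) = col W p \<or> ch W (3*q+2) (5*q+3) = col W p))"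
proof -
  define g where "g i = (if i \<le> q then 3*q+2+i else if i \<le> 2*q+1 then i - q else 5*q+3)" for i :: nat
  define E where "E i = (if i < 2*q+2 then c {V W (g i), V W (g (Suc i))} else c {V W (g (2*q+2)), V W (g 0)})" for i
  define \<phi> where "\<phi> i = (if i \<le> q then 3*q+2+i else i - q)" for i :: nat
  define Ch where "Ch = {2*q+1, 2*q+2::nat}"
  have gl: "\<forall>i<2*q+3. g i < 6*q+3" using q1 by (auto simp: g_def)
  have gi: "inj_on g {..<2*q+3}" using q1 by (auto simp: inj_on_def g_def split: if_splits)
  have E1: "\<forall>i<2*q+2. E i = c {V W (g i), V W (g (Suc i))}" by (simp add: E_def)
  have E2: "E (2*q+2) = c {V W (g (2*q+2)), V W (g 0)}" by (simp add: E_def)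
  have Chs: "Ch \<subseteq> {..<2*q+3}" by (auto simp: Ch_def)
  have arcs: "\<forall>i<2*q+3. i \<notin> Ch \<longrightarrow> E i = col W (\<phi> i)"
  proof (intro allI impI)
    fix i assume i: "i < 2*q+3" "i \<notin> Ch"
    have "(i < q) \<or> (i = q) \<or> (q+1 \<le> i \<and> i \<le> 2*q)" using i q1 by (auto simp: Ch_def)
    then consider (c0) "i < q" | (c1) "i = q" | (c2) "q+1 \<le> i" "i \<le> 2*q" by blast
    then show "E i = col W (\<phi> i)"
    proof cases
      case c0 then show ?thesis using q1 by (simp add: E_def, intro edge_fwd) (simp_all add: g_def \<phi>_def)
    next
      case c1 then show ?thesis using q1 by (simp add: E_def, intro chA[OF hA]) (simp_all add: g_def \<phi>_def)
    next
      case c2 then show ?thesis using q1 by (simp add: E_def, intro edge_fwd) (simp_all add: g_def \<phi>_def)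
    qed
  qed
  have phinj: "inj_on (\<lambda>i. \<phi> i mod (6*q+3)) ({..<2*q+3} - Ch)"
    using q1 by (auto simp: inj_on_def \<phi>_def Ch_def split: if_splits)
  have e0: "E (2*q+1) = ch W (q+1) (5*q+3)" using q1 by (simp add: E_def, intro chI) (simp_all add: g_def)
  have e1: "E (2*q+2) = ch W (3*q+2) (5*q+3)" using q1 by (simp add: E_def, intro chI') (simp_all add: g_def)
  have ph: "\<And>j. j < 2*q+3 \<Longrightarrow> j \<notin> Ch \<Longrightarrow> 3*q+2 \<le> \<phi> j \<and> \<phi> j \<le> 4*q+2 \<or> 1 \<le> \<phi> j \<and> \<phi> j \<le> q"
    using q1 by (auto simp: \<phi>_def Ch_def)
  from builder[OF rc gl gi E1 E2 Chs arcs phinj] ph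
  show ?thesis
    unfolding Ch_def using e0 e1 by (auto; metis)
qed

lemma tS2:
  assumes rc: "RC W"
    and hA: "ch W (2*q+1) (4*q+3) = col W (2*q+1)"
  shows "ch W (3*q+2) (5*q+3) = ch W (q+1) (3*q+2) \<or> (\<exists>p. (q+1 \<le> p \<and> p \<le> 2*q+1 \<or> 4*q+3 \<le> p \<and> p \<le> 5*q+2) \<and> (ch W (3*q+2) (5*q+3) = col W p \<or> ch W (q+1) (3*q+2) = col W p))"
proof -
  define g where "g i = (if i \<le> q then q+1+i else if i \<le> 2*q+1 then i+3*q+2 else 3*q+2)" for i :: nat
  define E where "E i = (if i < 2*q+2 then c {V W (g i), V W (g (Suc i))} else c {V W (g (2*q+2)), V W (g 0)})" for i
  define \<phi> where "\<phi> i = (if i \<le> q then q+1+i else i+3*q+2)" for i :: nat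
  define Ch where "Ch = {2*q+1, 2*q+2::nat}"
  have gl: "\<forall>i<2*q+3. g i < 6*q+3" using q1 by (auto simp: g_def)
  have gi: "inj_on g {..<2*q+3}" using q1 by (auto simp: inj_on_def g_def split: if_splits)
  have E1: "\<forall>i<2*q+2. E i = c {V W (g i), V W (g (Suc i))}" by (simp add: E_def)
  have E2: "E (2*q+2) = c {V W (g (2*q+2)), V W (g 0)}" by (simp add: E_def)
  have Chs: "Ch \<subseteq> {..<2*q+3}" by (auto simp: Ch_def)
  have arcs: "\<forall>i<2*q+3. i \<notin> Ch \<longrightarrow> E i = col W (\<phi> i)"
  proof (intro allI impI)
    fix i assume i: "i < 2*q+3" "i \<notin> Ch"
    have "(i < q) \<or> (i = q) \<or> (q+1 \<le> i \<and> i \<le> 2*q)" using i q1 by (auto simp: Ch_def)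
    then consider (c0) "i < q" | (c1) "i = q" | (c2) "q+1 \<le> i" "i \<le> 2*q" by blast
    then show "E i = col W (\<phi> i)"
    proof cases
      case c0 then show ?thesis using q1 by (simp add: E_def, intro edge_fwd) (simp_all add: g_def \<phi>_def)
    next
      case c1 then show ?thesis using q1 by (simp add: E_def, intro chA[OF hA]) (simp_all add: g_def \<phi>_def)
    next
      case c2 then show ?thesis using q1 by (simp add: E_def, intro edge_fwd) (simp_all add: g_def \<phi>_def)
    qed
  qed
  have phinj: "inj_on (\<lambda>i. \<phi> i mod (6*q+3)) ({..<2*q+3} - Ch)"
    using q1 by (auto simp: inj_on_def \<phi>_def Ch_def split: if_splits)
  have e0: "E (2*q+1) = ch W (3*q+2) (5*q+3)" using q1 by (simp add: E_def, intro chI') (simp_all add: g_def)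
  have e1: "E (2*q+2) = ch W (q+1) (3*q+2)" using q1 by (simp add: E_def, intro chI') (simp_all add: g_def)
  have ph: "\<And>j. j < 2*q+3 \<Longrightarrow> j \<notin> Ch \<Longrightarrow> q+1 \<le> \<phi> j \<and> \<phi> j \<le> 2*q+1 \<or> 4*q+3 \<le> \<phi> j \<and> \<phi> j \<le> 5*q+2"
    using q1 by (auto simp: \<phi>_def Ch_def)
  from builder[OF rc gl gi E1 E2 Chs arcs phinj] ph
  show ?thesis
    unfolding Ch_def using e0 e1 by (auto; metis)
qed

lemma tS3:
  assumes rc: "RC W"
    and hA: "ch W 0 (2*q+2) = col W 0"
  shows "ch W (q+1) (3*q+2) = ch W (q+1) (5*q+3) \<or> (\<exists>p. (5*q+3 \<le> p \<and> p \<le> 6*q+2 \<or> p = 0 \<or> 2*q+2 \<le> p \<and> p \<le> 3*q+1) \<and> (ch W (q+1) (3*q+2) = col W p \<or> ch W (q+1) (5*q+3) = col W p))"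
proof -
  define g where "g i = (if i < q then 5*q+3+i else if i = q then 0 else if i \<le> 2*q+1 then i+q+1 else q+1)" for i :: nat
  define E where "E i = (if i < 2*q+2 then c {V W (g i), V W (g (Suc i))} else c {V W (g (2*q+2)), V W (g 0)})" for i
  define \<phi> where "\<phi> i = (if i < q then 5*q+3+i else if i = q then 0 else i+q+1)" for i :: nat
  define Ch where "Ch = {2*q+1, 2*q+2::nat}"
  have gl: "\<forall>i<2*q+3. g i < 6*q+3" using q1 by (auto simp: g_def)
  have gi: "inj_on g {..<2*q+3}" using q1 by (auto simp: inj_on_def g_def split: if_splits)
  have E1: "\<forall>i<2*q+2. E i = c {V W (g i), V W (g (Suc i))}" by (simp add: E_def)
  have E2: "E (2*q+2) = c {V W (g (2*q+2)), V W (g 0)}" by (simp add: E_def)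
  have Chs: "Ch \<subseteq> {..<2*q+3}" by (auto simp: Ch_def)
  have arcs: "\<forall>i<2*q+3. i \<notin> Ch \<longrightarrow> E i = col W (\<phi> i)"
  proof (intro allI impI)
    fix i assume i: "i < 2*q+3" "i \<notin> Ch"
    have "(Suc i < q) \<or> (Suc i = q) \<or> (i = q) \<or> (q+1 \<le> i \<and> i \<le> 2*q)" using i q1 by (auto simp: Ch_def)
    then consider (c0) "Suc i < q" | (c1) "Suc i = q" | (c2) "i = q" | (c3) "q+1 \<le> i" "i \<le> 2*q" by blast
    then show "E i = col W (\<phi> i)"
    proof cases
      case c0 then show ?thesis using q1 by (simp add: E_def, intro edge_fwd) (simp_all add: g_def \<phi>_def)
    next
      case c1 then show ?thesis using q1 by (simp add: E_def, intro edge_wf) (simp_all add: g_def \<phi>_def)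
    next
      case c2 then show ?thesis using q1 by (simp add: E_def, intro chA[OF hA]) (simp_all add: g_def \<phi>_def)
    next
      case c3 then show ?thesis using q1 by (simp add: E_def, intro edge_fwd) (simp_all add: g_def \<phi>_def)
    qed
  qed
  have phinj: "inj_on (\<lambda>i. \<phi> i mod (6*q+3)) ({..<2*q+3} - Ch)"
    using q1 by (auto simp: inj_on_def \<phi>_def Ch_def split: if_splits)
  have e0: "E (2*q+1) = ch W (q+1) (3*q+2)" using q1 by (simp add: E_def, intro chI') (simp_all add: g_def)
  have e1: "E (2*q+2) = ch W (q+1) (5*q+3)" using q1 by (simp add: E_def, intro chI) (simp_all add: g_def)
  have ph: "\<And>j. j < 2*q+3 \<Longrightarrow> j \<notin> Ch \<Longrightarrow> 5*q+3 \<le> \<phi> j \<and> \<phi> j \<le> 6*q+2 \<or> \<phi> j = 0 \<or> 2*q+2 \<le> \<phi> j \<and> \<phi> j \<le> 3*q+1"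
    using q1 by (auto simp: \<phi>_def Ch_def)
  from builder[OF rc gl gi E1 E2 Chs arcs phinj] ph
  show ?thesis
    unfolding Ch_def using e0 e1 by (auto; metis)
qed

lemma tIx:
  assumes rc: "RC W"
    and hA: "ch W (2*q+1) (4*q+3) = col W (2*q+1)"
  shows "\<exists>p. (q+1 \<le> p \<and> p \<le> 2*q+1 \<or> 3*q+2 \<le> p \<and> p \<le> 4*q+2) \<and> ch W (q+1) (3*q+2) = col W p"
proof -
  define g where "g i = (if i \<le> q then q+1+i else 5*q+4-i)" for i :: nat
  define E where "E i = (if i < 2*q+2 then c {V W (g i), V W (g (Suc i))} else c {V W (g (2*q+2)), V W (g 0)})" for i
  define \<phi> where "\<phi> i = (if i \<le> q then q+1+i else 5*q+3-i)" for i :: nat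
  define Ch where "Ch = {2*q+2::nat}"
  have gl: "\<forall>i<2*q+3. g i < 6*q+3" using q1 by (auto simp: g_def)
  have gi: "inj_on g {..<2*q+3}" using q1 by (auto simp: inj_on_def g_def split: if_splits)
  have E1: "\<forall>i<2*q+2. E i = c {V W (g i), V W (g (Suc i))}" by (simp add: E_def)
  have E2: "E (2*q+2) = c {V W (g (2*q+2)), V W (g 0)}" by (simp add: E_def)
  have Chs: "Ch \<subseteq> {..<2*q+3}" by (auto simp: Ch_def)
  have arcs: "\<forall>i<2*q+3. i \<notin> Ch \<longrightarrow> E i = col W (\<phi> i)"
  proof (intro allI impI)
    fix i assume i: "i < 2*q+3" "i \<notin> Ch"
    have "(i < q) \<or> (i = q) \<or> (q+1 \<le> i \<and> i \<le> 2*q+1)" using i q1 by (auto simp: Ch_def)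
    then consider (c0) "i < q" | (c1) "i = q" | (c2) "q+1 \<le> i" "i \<le> 2*q+1" by blast
    then show "E i = col W (\<phi> i)"
    proof cases
      case c0 then show ?thesis using q1 by (simp add: E_def, intro edge_fwd) (simp_all add: g_def \<phi>_def)
    next
      case c1 then show ?thesis using q1 by (simp add: E_def, intro chA[OF hA]) (simp_all add: g_def \<phi>_def)
    next
      case c2 then show ?thesis using q1 by (simp add: E_def, intro edge_bwd) (simp_all add: g_def \<phi>_def)
    qed
  qed
  have phinj: "inj_on (\<lambda>i. \<phi> i mod (6*q+3)) ({..<2*q+3} - Ch)"
    using q1 by (auto simp: inj_on_def \<phi>_def Ch_def split: if_splits)
  have e0: "E (2*q+2) = ch W (q+1) (3*q+2)" using q1 by (simp add: E_def, intro chI') (simp_all add: g_def)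
  have ph: "\<And>j. j < 2*q+3 \<Longrightarrow> j \<notin> Ch \<Longrightarrow> q+1 \<le> \<phi> j \<and> \<phi> j \<le> 2*q+1 \<or> 3*q+2 \<le> \<phi> j \<and> \<phi> j \<le> 4*q+2"
    using q1 by (auto simp: \<phi>_def Ch_def)
  from builder[OF rc gl gi E1 E2 Chs arcs phinj] ph
  show ?thesis
    unfolding Ch_def using e0 by auto
qed

lemma tIy:
  assumes rc: "RC W"
    and hA: "ch W (4*q+2) 1 = col W (4*q+2)"
  shows "\<exists>p. (3*q+2 \<le> p \<and> p \<le> 4*q+2 \<or> p = 0 \<or> 5*q+3 \<le> p \<and> p \<le> 6*q+2) \<and> ch W (3*q+2) (5*q+3) = col W p"
proof -
  define g where "g i = (if i \<le> q then 3*q+2+i else if i = q+1 then 1 else if i = q+2 then 0 else 7*q+5-i)" for i :: nat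
  define E where "E i = (if i < 2*q+2 then c {V W (g i), V W (g (Suc i))} else c {V W (g (2*q+2)), V W (g 0)})" for i
  define \<phi> where "\<phi> i = (if i \<le> q then 3*q+2+i else if i = q+1 then 0 else if i = q+2 then 6*q+2 else 7*q+4-i)" for i :: nat
  define Ch where "Ch = {2*q+2::nat}"
  have gl: "\<forall>i<2*q+3. g i < 6*q+3" using q1 by (auto simp: g_def)
  have gi: "inj_on g {..<2*q+3}" using q1 by (auto simp: inj_on_def g_def split: if_splits)
  have E1: "\<forall>i<2*q+2. E i = c {V W (g i), V W (g (Suc i))}" by (simp add: E_def)
  have E2: "E (2*q+2) = c {V W (g (2*q+2)), V W (g 0)}" by (simp add: E_def)
  have Chs: "Ch \<subseteq> {..<2*q+3}" by (auto simp: Ch_def)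
  have arcs: "\<forall>i<2*q+3. i \<notin> Ch \<longrightarrow> E i = col W (\<phi> i)"
  proof (intro allI impI)
    fix i assume i: "i < 2*q+3" "i \<notin> Ch"
    have "(i < q) \<or> (i = q) \<or> (i = q+1) \<or> (i = q+2) \<or> (q+3 \<le> i \<and> i \<le> 2*q+1)" using i q1 by (auto simp: Ch_def)
    then consider (c0) "i < q" | (c1) "i = q" | (c2) "i = q+1" | (c3) "i = q+2" | (c4) "q+3 \<le> i" "i \<le> 2*q+1" by blast
    then show "E i = col W (\<phi> i)"
    proof cases
      case c0 then show ?thesis using q1 by (simp add: E_def, intro edge_fwd) (simp_all add: g_def \<phi>_def)
    next
      case c1 then show ?thesis using q1 by (simp add: E_def, intro chA[OF hA]) (simp_all add: g_def \<phi>_def)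
    next
      case c2 then show ?thesis using q1 by (simp add: E_def, intro edge_bwd) (simp_all add: g_def \<phi>_def)
    next
      case c3 then show ?thesis using q1 by (simp add: E_def, intro edge_wb) (simp_all add: g_def \<phi>_def)
    next
      case c4 then show ?thesis using q1 by (simp add: E_def, intro edge_bwd) (simp_all add: g_def \<phi>_def)
    qed
  qed
  have phinj: "inj_on (\<lambda>i. \<phi> i mod (6*q+3)) ({..<2*q+3} - Ch)"
    using q1 by (auto simp: inj_on_def \<phi>_def Ch_def split: if_splits)
  have e0: "E (2*q+2) = ch W (3*q+2) (5*q+3)" using q1 by (simp add: E_def, intro chI') (simp_all add: g_def)
  have ph: "\<And>j. j < 2*q+3 \<Longrightarrow> j \<notin> Ch \<Longrightarrow> 3*q+2 \<le> \<phi> j \<and> \<phi> j \<le> 4*q+2 \<or> \<phi> j = 0 \<or> 5*q+3 \<le> \<phi> j \<and> \<phi> j \<le> 6*q+2"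
    using q1 by (auto simp: \<phi>_def Ch_def)
  from builder[OF rc gl gi E1 E2 Chs arcs phinj] ph
  show ?thesis
    unfolding Ch_def using e0 by auto
qed

lemma tIz:
  assumes rc: "RC W"
    and hA: "ch W 0 (2*q+2) = col W 0"
  shows "\<exists>p. (5*q+3 \<le> p \<and> p \<le> 6*q+2 \<or> p = 0 \<or> q+1 \<le> p \<and> p \<le> 2*q+1) \<and> ch W (q+1) (5*q+3) = col W p"
proof -
  define g where "g i = (if i < q then 5*q+3+i else if i = q then 0 else 3*q+3-i)" for i :: nat
  define E where "E i = (if i < 2*q+2 then c {V W (g i), V W (g (Suc i))} else c {V W (g (2*q+2)), V W (g 0)})" for i
  define \<phi> where "\<phi> i = (if i < q then 5*q+3+i else if i = q then 0 else 3*q+2-i)" for i :: nat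
  define Ch where "Ch = {2*q+2::nat}"
  have gl: "\<forall>i<2*q+3. g i < 6*q+3" using q1 by (auto simp: g_def)
  have gi: "inj_on g {..<2*q+3}" using q1 by (auto simp: inj_on_def g_def split: if_splits)
  have E1: "\<forall>i<2*q+2. E i = c {V W (g i), V W (g (Suc i))}" by (simp add: E_def)
  have E2: "E (2*q+2) = c {V W (g (2*q+2)), V W (g 0)}" by (simp add: E_def)
  have Chs: "Ch \<subseteq> {..<2*q+3}" by (auto simp: Ch_def)
  have arcs: "\<forall>i<2*q+3. i \<notin> Ch \<longrightarrow> E i = col W (\<phi> i)"
  proof (intro allI impI)
    fix i assume i: "i < 2*q+3" "i \<notin> Ch"
    have "(Suc i < q) \<or> (Suc i = q) \<or> (i = q) \<or> (q+1 \<le> i \<and> i \<le> 2*q+1)" using i q1 by (auto simp: Ch_def)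
    then consider (c0) "Suc i < q" | (c1) "Suc i = q" | (c2) "i = q" | (c3) "q+1 \<le> i" "i \<le> 2*q+1" by blast
    then show "E i = col W (\<phi> i)"
    proof cases
      case c0 then show ?thesis using q1 by (simp add: E_def, intro edge_fwd) (simp_all add: g_def \<phi>_def)
    next
      case c1 then show ?thesis using q1 by (simp add: E_def, intro edge_wf) (simp_all add: g_def \<phi>_def)
    next
      case c2 then show ?thesis using q1 by (simp add: E_def, intro chA[OF hA]) (simp_all add: g_def \<phi>_def)
    next
      case c3 then show ?thesis using q1 by (simp add: E_def, intro edge_bwd) (simp_all add: g_def \<phi>_def)
    qed
  qed
  have phinj: "inj_on (\<lambda>i. \<phi> i mod (6*q+3)) ({..<2*q+3} - Ch)"
    using q1 by (auto simp: inj_on_def \<phi>_def Ch_def split: if_splits)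
  have e0: "E (2*q+2) = ch W (q+1) (5*q+3)" using q1 by (simp add: E_def, intro chI) (simp_all add: g_def)
  have ph: "\<And>j. j < 2*q+3 \<Longrightarrow> j \<notin> Ch \<Longrightarrow> 5*q+3 \<le> \<phi> j \<and> \<phi> j \<le> 6*q+2 \<or> \<phi> j = 0 \<or> q+1 \<le> \<phi> j \<and> \<phi> j \<le> 2*q+1"
    using q1 by (auto simp: \<phi>_def Ch_def)
  from builder[OF rc gl gi E1 E2 Chs arcs phinj] ph
  show ?thesis
    unfolding Ch_def using e0 by auto
qed


lemma arithF:
  fixes px py pz :: nat
  assumes Ix: "q+1 \<le> px \<and> px \<le> 2*q+1 \<or> 3*q+2 \<le> px \<and> px \<le> 4*q+2"
  and Iy: "3*q+2 \<le> py \<and> py \<le> 4*q+2 \<or> py = 0 \<or> 5*q+3 \<le> py \<and> py \<le> 6*q+2"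
  and Iz: "5*q+3 \<le> pz \<and> pz \<le> 6*q+2 \<or> pz = 0 \<or> q+1 \<le> pz \<and> pz \<le> 2*q+1"
  and C1: "py = pz \<or> (q+1 \<le> py \<and> py \<le> 3*q+1) \<or> (q+1 \<le> pz \<and> pz \<le> 3*q+1)"
  and C2: "pz = px \<or> (3*q+2 \<le> pz \<and> pz \<le> 5*q+2) \<or> (3*q+2 \<le> px \<and> px \<le> 5*q+2)"
  and C3: "px = py \<or> (5*q+3 \<le> px \<and> px \<le> 6*q+2 \<or> px \<le> q) \<or> (5*q+3 \<le> py \<and> py \<le> 6*q+2 \<or> py \<le> q)"
  and S1: "pz = py \<or> (3*q+2 \<le> pz \<and> pz \<le> 4*q+2 \<or> 1 \<le> pz \<and> pz \<le> q) \<or> (3*q+2 \<le> py \<and> py \<le> 4*q+2 \<or> 1 \<le> py \<and> py \<le> q)"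
  and S2: "py = px \<or> (q+1 \<le> py \<and> py \<le> 2*q+1 \<or> 4*q+3 \<le> py \<and> py \<le> 5*q+2) \<or> (q+1 \<le> px \<and> px \<le> 2*q+1 \<or> 4*q+3 \<le> px \<and> px \<le> 5*q+2)"
  and S3: "px = pz \<or> (5*q+3 \<le> px \<and> px \<le> 6*q+2 \<or> px = 0 \<or> 2*q+2 \<le> px \<and> px \<le> 3*q+1) \<or> (5*q+3 \<le> pz \<and> pz \<le> 6*q+2 \<or> pz = 0 \<or> 2*q+2 \<le> pz \<and> pz \<le> 3*q+1)"
  shows False
proof (cases "3*q+2 \<le> px")
  case True
  then have px2: "3*q+2 \<le> px \<and> px \<le> 4*q+2" using Ix by linarith
  have "py = px" using S2 px2 Iy by linarith
  then have py1: "3*q+2 \<le> py \<and> py \<le> 4*q+2" using px2 by simp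
  have pz2: "q+1 \<le> pz \<and> pz \<le> 2*q+1"
  proof -
    have "py \<noteq> pz" using py1 Iz by auto
    then show ?thesis using C1 py1 Iz by linarith
  qed
  have "px \<noteq> pz" using px2 pz2 by linarith
  then show False using S3 px2 pz2 by linarith
next
  case False
  then have px1: "q+1 \<le> px \<and> px \<le> 2*q+1" using Ix by linarith
  have "pz = px" using C2 px1 Iz False by linarith
  then have pz2: "q+1 \<le> pz \<and> pz \<le> 2*q+1" using px1 by simp
  have py2: "py = 0 \<or> 5*q+3 \<le> py \<and> py \<le> 6*q+2"
  proof -
    have "px \<noteq> py" using px1 Iy by auto
    then show ?thesis using C3 px1 Iy by linarith
  qed
  have "pz \<noteq> py" using pz2 py2 by auto
  then show False using S1 pz2 py2 by linarith
qed

lemma tr2: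
  assumes rc: "RC W" and u: "u = col W pu" and v: "v = col W pv" and b: "pu < 6*q+3" "pv < 6*q+3"
    and H: "u = v \<or> (\<exists>p. R p \<and> (u = col W p \<or> v = col W p))"
    and R: "\<And>p. R p \<Longrightarrow> p < 6*q+3"
  shows "pu = pv \<or> R pu \<or> R pv"
proof (cases "u = v")
  case True
  then have "pu = pv" using ceqI[OF rc u] v b by simp
  then show ?thesis by simp
next
  case False
  then obtain p where p: "R p" "u = col W p \<or> v = col W p" using H by blast
  show ?thesis
  proof (cases "u = col W p")
    case True
    then have "pu = p" using ceqI[OF rc u] b R[OF p(1)] by simp
    then show ?thesis using p(1) by simp
  next
    case False
    then have "v = col W p" using p(2) by simp
    then have "pv = p" using ceqI[OF rc v] b R[OF p(1)] by simp
    then show ?thesis using p(1) by simp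
  qed
qed

lemma mainF:
  assumes rc: "RC W"
    and h0: "ch W 0 (2*q+2) = col W 0"
    and h1: "ch W (2*q+1) (4*q+3) = col W (2*q+1)"
    and h2: "ch W (4*q+2) 1 = col W (4*q+2)"
  shows False
proof -
  obtain px where px: "q+1 \<le> px \<and> px \<le> 2*q+1 \<or> 3*q+2 \<le> px \<and> px \<le> 4*q+2" "ch W (q+1) (3*q+2) = col W px"
    using tIx[OF rc h1] by blast
  obtain py where py: "3*q+2 \<le> py \<and> py \<le> 4*q+2 \<or> py = 0 \<or> 5*q+3 \<le> py \<and> py \<le> 6*q+2" "ch W (3*q+2) (5*q+3) = col W py"
    using tIy[OF rc h2] by blast
  obtain pz where pz: "5*q+3 \<le> pz \<and> pz \<le> 6*q+2 \<or> pz = 0 \<or> q+1 \<le> pz \<and> pz \<le> 2*q+1" "ch W (q+1) (5*q+3) = col W pz"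
    using tIz[OF rc h0] by blast
  have bx: "px < 6*q+3" using px(1) by linarith
  have by': "py < 6*q+3" using py(1) by linarith
  have bz: "pz < 6*q+3" using pz(1) by linarith
  have H1: "ch W (3*q+2) (5*q+3) = ch W (q+1) (5*q+3) \<or> (\<exists>p. (q+1 \<le> p \<and> p \<le> 3*q+1) \<and> (ch W (3*q+2) (5*q+3) = col W p \<or> ch W (q+1) (5*q+3) = col W p))"
    using tC1[OF rc] by blast
  have C1: "py = pz \<or> (q+1 \<le> py \<and> py \<le> 3*q+1) \<or> (q+1 \<le> pz \<and> pz \<le> 3*q+1)"
    using tr2[OF rc py(2) pz(2) by' bz H1] by auto
  have H2: "ch W (q+1) (5*q+3) = ch W (q+1) (3*q+2) \<or> (\<exists>p. (3*q+2 \<le> p \<and> p \<le> 5*q+2) \<and> (ch W (q+1) (5*q+3) = col W p \<or> ch W (q+1) (3*q+2) = col W p))"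
    using tC2[OF rc] by blast
  have C2: "pz = px \<or> (3*q+2 \<le> pz \<and> pz \<le> 5*q+2) \<or> (3*q+2 \<le> px \<and> px \<le> 5*q+2)"
    using tr2[OF rc pz(2) px(2) bz bx H2] by auto
  have C3: "px = py \<or> (5*q+3 \<le> px \<and> px \<le> 6*q+2 \<or> px \<le> q) \<or> (5*q+3 \<le> py \<and> py \<le> 6*q+2 \<or> py \<le> q)"
    by (rule tr2[OF rc px(2) py(2) bx by' tC3[OF rc]]) auto
  have S1: "pz = py \<or> (3*q+2 \<le> pz \<and> pz \<le> 4*q+2 \<or> 1 \<le> pz \<and> pz \<le> q) \<or> (3*q+2 \<le> py \<and> py \<le> 4*q+2 \<or> 1 \<le> py \<and> py \<le> q)"
    by (rule tr2[OF rc pz(2) py(2) bz by' tS1[OF rc h2]]) auto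
  have S2: "py = px \<or> (q+1 \<le> py \<and> py \<le> 2*q+1 \<or> 4*q+3 \<le> py \<and> py \<le> 5*q+2) \<or> (q+1 \<le> px \<and> px \<le> 2*q+1 \<or> 4*q+3 \<le> px \<and> px \<le> 5*q+2)"
    by (rule tr2[OF rc py(2) px(2) by' bx tS2[OF rc h1]]) auto
  have S3: "px = pz \<or> (5*q+3 \<le> px \<and> px \<le> 6*q+2 \<or> px = 0 \<or> 2*q+2 \<le> px \<and> px \<le> 3*q+1) \<or> (5*q+3 \<le> pz \<and> pz \<le> 6*q+2 \<or> pz = 0 \<or> 2*q+2 \<le> pz \<and> pz \<le> 3*q+1)"
    by (rule tr2[OF rc px(2) pz(2) bx bz tS3[OF rc h0]]) auto
  show False using arithF[OF px(1) py(1) pz(1) C1 C2 C3 S1 S2 S3] .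
qed

lemma reflV1: "x < 6*q+3 \<Longrightarrow> x \<le> s \<Longrightarrow> s - x = y \<Longrightarrow> V (refl W s) x = V W y"
proof -
  assume a: "x < 6*q+3" "x \<le> s" "s - x = y"
  then have "s + (6*q+3) - x = y + (6*q+3)" by simp
  then show ?thesis using refl_V[OF a(1), of W s] V_add[of W y] by simp
qed

lemma reflV2: "x < 6*q+3 \<Longrightarrow> s + (6*q+3) - x = y \<Longrightarrow> V (refl W s) x = V W y"
  using refl_V[of x W s] by simp

lemma reflC1: "x < 6*q+3 \<Longrightarrow> Suc x \<le> s \<Longrightarrow> s - Suc x = y \<Longrightarrow> col (refl W s) x = col W y"
  using refl_col[of x W s] colm[of "s + (6*q+3) - Suc x" W] by simp

lemma reflC2: "x < 6*q+3 \<Longrightarrow> s + (6*q+3) - Suc x = y \<Longrightarrow> col (refl W s) x = col W y"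
  using refl_col[of x W s] by simp

lemma no_rc: "\<not> has_rainbow_cycle c (6*q+3)"
proof
  assume "has_rainbow_cycle c (6*q+3)"
  then obtain W where rc: "RC W" unfolding has_rainbow_cycle_def by blast
  from triple[OF rc] show False
  proof
    assume "ch W 0 (2*q+2) = col W 0 \<and> ch W (2*q+1) (4*q+3) = col W (2*q+1) \<and> ch W (4*q+2) 1 = col W (4*q+2)"
    then show False using mainF[OF rc] by blast
  next
    assume L: "ch W 0 (2*q+2) = col W (2*q+1) \<and> ch W (2*q+1) (4*q+3) = col W (4*q+2) \<and> ch W (4*q+2) 1 = col W 0"
    define W' where "W' = refl W (2*q+2)"
    have rc': "RC W'" unfolding W'_def using refl_RC[OF rc] .
    have a0: "ch W' 0 (2*q+2) = ch W 0 (2*q+2)"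
      unfolding ch_def W'_def
      by (insert q1, subst reflV1[of 0], simp, simp, simp, subst reflV1[of "2*q+2"], simp_all add: insert_commute)
    have c0: "col W' 0 = col W (2*q+1)" unfolding W'_def using q1 by (rule_tac reflC1) simp_all
    have a1: "ch W' (2*q+1) (4*q+3) = ch W (4*q+2) 1"
      unfolding ch_def W'_def
      by (insert q1, subst reflV1[of "2*q+1"], simp, simp, simp, subst reflV2[of "4*q+3" _ "4*q+2"], simp_all add: insert_commute)
    have c1: "col W' (2*q+1) = col W 0" unfolding W'_def using q1 by (rule_tac reflC1) simp_all
    have a2: "ch W' (4*q+2) 1 = ch W (2*q+1) (4*q+3)"
      unfolding ch_def W'_def
      by (insert q1, subst reflV2[of "4*q+2" _ "4*q+3"], simp, simp, subst reflV1[of 1 _ "2*q+1"], simp_all add: insert_commute)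
    have c2: "col W' (4*q+2) = col W (4*q+2)" unfolding W'_def using q1 by (rule_tac reflC2) simp_all
    show False using mainF[OF rc'] L a0 a1 a2 c0 c1 c2 by simp
  qed
qed

end

theorem lemma12:
  fixes c :: "'v set \<Rightarrow> 'c" and n :: nat
  assumes "odd n" and "n > 3"
    and "\<not> has_rainbow_cycle c n"
  shows "\<not> has_rainbow_cycle c (3 * n - 6)"
proof -
  obtain q where n: "n = 2*q+3" and q1: "1 \<le> q"
  proof -
    obtain r where r: "n = 2*r+1" using assms(1) oddE by blast
    show ?thesis using r assms(2) by (intro that[of "r - 1"]) auto
  qed
  have "rc c q" by unfold_locales (use q1 assms(3) n in auto)
  then have "\<not> has_rainbow_cycle c (6*q+3)" by (rule rc.no_rc)
  moreover have "3 * n - 6 = 6*q+3" using n by simp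
  ultimately show ?thesis by simp
qed

end
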